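(* Let the premiums $\{X_n, n\geq 1\}$ and the claims $\{Y_n, n\geq 1\}$ be sequences of nonnegative, identically distributed, independent random variables with finite expectations, and let the rates of interest $\{I_n, n\geq 1\}$ be a sequence of i.i.d. nonnegative random variables with finite expectations. Suppose that the sequences $\{X_n\}$, $\{Y_n\}$, $\{I_n\}$ are mutually independent. For $u\geq 0$ define $U_0=u$, $U_n=U_{n-1}(1+I_n)+X_n-Y_n$ for $n\geq 1$, and $\Psi(u)=\mathbb{P}\big(\bigcup_{n=1}^\infty\{U_n<0\}\big)$. If there exists a positive real number $R$ satisfying $$\mathbb{E}\Big(e^{R\left(Y_1-X_1\right)}\Big)\leq 1,$$ then $\Psi(u)\leq e^{-Ru}$ for all $u>0$. *)

theory Defs
  imports "HOL-Probability.Probability"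
begin

fun surplus :: "real \<Rightarrow> (nat \<Rightarrow> 'a \<Rightarrow> real) \<Rightarrow> (nat \<Rightarrow> 'a \<Rightarrow> real) \<Rightarrow> (nat \<Rightarrow> 'a \<Rightarrow> real)
                 \<Rightarrow> nat \<Rightarrow> 'a \<Rightarrow> real" where
  "surplus u X Y I 0 \<omega> = u"
| "surplus u X Y I (Suc n) \<omega> =
     surplus u X Y I n \<omega> * (1 + I (Suc n) \<omega>) + X (Suc n) \<omega> - Y (Suc n) \<omega>"

definition ruin_prob :: "'a measure \<Rightarrow> real \<Rightarrow> (nat \<Rightarrow> 'a \<Rightarrow> real) \<Rightarrow> (nat \<Rightarrow> 'a \<Rightarrow> real)
                 \<Rightarrow> (nat \<Rightarrow> 'a \<Rightarrow> real) \<Rightarrow> real" where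
  "ruin_prob M u X Y I = measure M (\<Union>n\<in>{1..}. {\<omega> \<in> space M. surplus u X Y I n \<omega> < 0})"

end

theory Submission imports Defs begin

lemma (in prob_space) inter_repr:
  fixes Z :: "nat \<Rightarrow> 'a \<Rightarrow> real"
  assumes "J0 \<noteq> {}" "J0 \<subseteq> {1..}"
  shows "(\<Inter>k\<in>J0. Z k -` B k \<inter> space M) =
    (\<lambda>\<omega>. \<lambda>n\<in>{1..}. Z n \<omega>) -` prod_emb {1..} (\<lambda>_. borel) J0 (PiE J0 B) \<inter> space M"
  using assms by (auto simp: prod_emb_def PiE_iff) (metis atLeast_iff subsetD)

lemma (in prob_space) inter_prob:
  fixes Z :: "nat \<Rightarrow> 'a \<Rightarrow> real"
  assumes ind: "indep_vars (\<lambda>_. borel) Z {1..}" and "finite J0" "J0 \<noteq> {}" "J0 \<subseteq> {1..}"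
    and "\<forall>k\<in>J0. B k \<in> sets borel"
  shows "prob (\<Inter>k\<in>J0. Z k -` B k \<inter> space M) = (\<Prod>k\<in>J0. prob (Z k -` B k \<inter> space M))"
  using ind assms(2-) unfolding indep_vars_def2
  by (intro indep_setsD[of "\<lambda>i. {Z i -` A \<inter> space M |A. A \<in> sets borel}" "{1..}"]) auto

lemma (in prob_space) combine_indep:
  fixes X Y :: "nat \<Rightarrow> 'a \<Rightarrow> real"
  assumes indX: "indep_vars (\<lambda>_. borel) X {1..}" and indY: "indep_vars (\<lambda>_. borel) Y {1..}"
   and mut: "\<And>A B. A \<in> sets (PiM {1..} (\<lambda>_. borel)) \<Longrightarrow> B \<in> sets (PiM {1..} (\<lambda>_. borel)) \<Longrightarrow>
     prob ((\<lambda>\<omega>. \<lambda>n\<in>{1..}. X n \<omega>) -` A \<inter> space M \<inter> ((\<lambda>\<omega>. \<lambda>n\<in>{1..}. Y n \<omega>) -` B \<inter> space M))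
     = prob ((\<lambda>\<omega>. \<lambda>n\<in>{1..}. X n \<omega>) -` A \<inter> space M) * prob ((\<lambda>\<omega>. \<lambda>n\<in>{1..}. Y n \<omega>) -` B \<inter> space M)"
  shows "indep_vars (\<lambda>_. borel) (\<lambda>i \<omega>. if fst i then Y (snd i) \<omega> else X (snd i) \<omega>) (UNIV \<times> {1..})"
proof -
  define V where "V = (\<lambda>i \<omega>. if fst i then Y (snd i) \<omega> else X (snd i) \<omega>)"
  have mX: "\<And>k. k \<in> {1..} \<Longrightarrow> X k \<in> borel_measurable M" using indX unfolding indep_vars_def2 by auto
  have mY: "\<And>k. k \<in> {1..} \<Longrightarrow> Y k \<in> borel_measurable M" using indY unfolding indep_vars_def2 by auto
  have mV: "\<And>i. i \<in> UNIV \<times> {1..} \<Longrightarrow> V i \<in> borel_measurable M"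
    using mX mY by (auto simp: V_def)
  have "indep_sets (\<lambda>i. {V i -` A \<inter> space M |A. A \<in> sets borel}) (UNIV \<times> {1..})"
  proof (rule indep_setsI)
    fix i assume "i \<in> (UNIV :: bool set) \<times> {1::nat..}"
    then show "{V i -` A \<inter> space M |A. A \<in> sets borel} \<subseteq> events"
      using measurable_sets[OF mV] by blast
  next
    fix A J assume J: "J \<noteq> {}" "J \<subseteq> (UNIV :: bool set) \<times> {1::nat..}" "finite J"
      and A: "\<forall>j\<in>J. A j \<in> {V j -` A \<inter> space M |A. A \<in> sets borel}"
    have ex: "\<forall>j\<in>J. \<exists>B. B \<in> sets borel \<and> A j = V j -` B \<inter> space M" using A by blast
    obtain B where B0: "\<forall>j\<in>J. B j \<in> sets borel \<and> A j = V j -` B j \<inter> space M"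
      using bchoice[OF ex] by (elim exE)
    have B: "\<And>j. j \<in> J \<Longrightarrow> B j \<in> sets borel \<and> A j = V j -` B j \<inter> space M"
      using B0 by blast
    define J0 where "J0 = Pair False -` J"
    define J1 where "J1 = Pair True -` J"
    have fin: "finite J0" "finite J1" unfolding J0_def J1_def using J(3)
      by (auto intro: finite_vimageI simp: inj_on_def)
    have sub: "J0 \<subseteq> {1..}" "J1 \<subseteq> {1..}" using J(2) unfolding J0_def J1_def by auto
    have Jeq: "J = Pair False ` J0 \<union> Pair True ` J1"
      unfolding J0_def J1_def
      apply (rule set_eqI) apply (case_tac x) apply (case_tac a) apply auto done
    have AX: "\<And>k. k \<in> J0 \<Longrightarrow> A (False, k) = X k -` B (False,k) \<inter> space M"
      using B unfolding J0_def V_def by auto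
    have AY: "\<And>k. k \<in> J1 \<Longrightarrow> A (True, k) = Y k -` B (True,k) \<inter> space M"
      using B unfolding J1_def V_def by auto
    have BX: "\<forall>k\<in>J0. B (False, k) \<in> sets borel" using B unfolding J0_def by auto
    have BY: "\<forall>k\<in>J1. B (True, k) \<in> sets borel" using B unfolding J1_def by auto
    have inter: "(\<Inter>j\<in>J. A j) = (\<Inter>k\<in>J0. X k -` B (False,k) \<inter> space M) \<inter> (\<Inter>k\<in>J1. Y k -` B (True,k) \<inter> space M)"
    proof -
      have "(\<Inter>j\<in>J. A j) = (\<Inter>k\<in>J0. A (False,k)) \<inter> (\<Inter>k\<in>J1. A (True,k))"
        by (subst Jeq) (simp add: INT_Un image_comp comp_def)
      also have "\<dots> = (\<Inter>k\<in>J0. X k -` B (False,k) \<inter> space M) \<inter> (\<Inter>k\<in>J1. Y k -` B (True,k) \<inter> space M)"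
        using AX AY by (intro arg_cong2[where f="(\<inter>)"] INF_cong refl) auto
      finally show ?thesis .
    qed
    have prodeq: "(\<Prod>j\<in>J. prob (A j)) = (\<Prod>k\<in>J0. prob (X k -` B (False,k) \<inter> space M)) * (\<Prod>k\<in>J1. prob (Y k -` B (True,k) \<inter> space M))"
      using fin AX AY by (subst Jeq, subst prod.union_disjoint) (auto simp: prod.reindex inj_on_def)
    show "prob (\<Inter>j\<in>J. A j) = (\<Prod>j\<in>J. prob (A j))"
    proof (cases "J0 = {}")
      case True
      then have J1ne: "J1 \<noteq> {}" using J(1) Jeq by auto
      show ?thesis unfolding inter prodeq using True inter_prob[OF indY fin(2) J1ne sub(2) BY] by simp
    next
      case F0: False
      show ?thesis
      proof (cases "J1 = {}")
        case True
        then show ?thesis unfolding inter prodeq using inter_prob[OF indX fin(1) F0 sub(1) BX] by simp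
      next
        case False
        show ?thesis unfolding inter prodeq
          unfolding inter_repr[OF F0 sub(1)] inter_repr[OF False sub(2)]
          apply (subst mut)
            apply (rule sets_PiM_I) using fin sub BX BY apply auto[3]
            apply (rule sets_PiM_I) using fin sub BX BY apply auto[3]
          unfolding inter_repr[OF F0 sub(1), symmetric] inter_repr[OF False sub(2), symmetric]
          using inter_prob[OF indX fin(1) F0 sub(1) BX] inter_prob[OF indY fin(2) False sub(2) BY] by simp
      qed
    qed
  qed
  then show ?thesis unfolding indep_vars_def2 V_def[symmetric] using mV by auto
qed


lemma comp_meas[measurable]: "(\<lambda>r. r i) \<in> borel_measurable (PiM I (\<lambda>_. (borel :: real measure)))"
proof (cases "i \<in> I")
  case True then show ?thesis by (rule measurable_component_singleton)
next
  case False
  have "(\<lambda>r. r i) \<in> borel_measurable (PiM I (\<lambda>_. (borel :: real measure))) \<longleftrightarrow>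
        (\<lambda>r. undefined :: real) \<in> borel_measurable (PiM I (\<lambda>_. (borel :: real measure)))"
    by (rule measurable_cong) (use False in \<open>auto simp: space_PiM PiE_def extensional_def\<close>)
  then show ?thesis by simp
qed

lemma (in prob_space) indep_prod_nn:
  fixes V :: "'i \<Rightarrow> 'a \<Rightarrow> real" and f g :: "('i \<Rightarrow> real) \<Rightarrow> ennreal"
  assumes ind: "indep_vars (\<lambda>_. borel) V T" and K: "K1 \<inter> K2 = {}" "K1 \<subseteq> T" "K2 \<subseteq> T"
    and f: "f \<in> borel_measurable (PiM K1 (\<lambda>_. borel))" and g: "g \<in> borel_measurable (PiM K2 (\<lambda>_. borel))"
  shows "(\<integral>\<^sup>+\<omega>. f (restrict (\<lambda>i. V i \<omega>) K1) * g (restrict (\<lambda>i. V i \<omega>) K2) \<partial>M)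
     = (\<integral>\<^sup>+\<omega>. f (restrict (\<lambda>i. V i \<omega>) K1) \<partial>M) * (\<integral>\<^sup>+\<omega>. g (restrict (\<lambda>i. V i \<omega>) K2) \<partial>M)"
proof -
  have "indep_var borel (f \<circ> (\<lambda>\<omega>. restrict (\<lambda>i. V i \<omega>) K1)) borel (g \<circ> (\<lambda>\<omega>. restrict (\<lambda>i. V i \<omega>) K2))"
    by (rule indep_var_compose[OF indep_var_restrict[OF ind K] f g])
  moreover have "case_bool borel borel = (\<lambda>_::bool. (borel :: ennreal measure))"
    by (rule ext) (simp split: bool.split)
  ultimately have ind2: "indep_vars (\<lambda>_. borel) (case_bool (f \<circ> (\<lambda>\<omega>. restrict (\<lambda>i. V i \<omega>) K1)) (g \<circ> (\<lambda>\<omega>. restrict (\<lambda>i. V i \<omega>) K2))) UNIV"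
    unfolding indep_var_def by simp
  have finB: "finite (UNIV :: bool set)" by simp
  have "(\<integral>\<^sup>+\<omega>. (\<Prod>i\<in>UNIV. case_bool (f \<circ> (\<lambda>\<omega>. restrict (\<lambda>i. V i \<omega>) K1)) (g \<circ> (\<lambda>\<omega>. restrict (\<lambda>i. V i \<omega>) K2)) i \<omega>) \<partial>M)
     = (\<Prod>i\<in>UNIV. \<integral>\<^sup>+\<omega>. case_bool (f \<circ> (\<lambda>\<omega>. restrict (\<lambda>i. V i \<omega>) K1)) (g \<circ> (\<lambda>\<omega>. restrict (\<lambda>i. V i \<omega>) K2)) i \<omega> \<partial>M)"
    by (rule indep_vars_nn_integral[OF finB ind2]) simp
  then show ?thesis by (simp add: UNIV_bool mult.commute comp_def)
qed

lemma surplus_bound: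
  fixes u :: real and X Y I :: "nat \<Rightarrow> 'a \<Rightarrow> real"
  assumes u: "u > 0" and I: "\<forall>k. 0 \<le> I (Suc k) \<omega>"
  shows "(\<exists>m. 1 \<le> m \<and> m \<le> n \<and> u - (\<Sum>j<m. Y (Suc j) \<omega> - X (Suc j) \<omega>) < 0)
     \<or> u - (\<Sum>j<n. Y (Suc j) \<omega> - X (Suc j) \<omega>) \<le> surplus u X Y I n \<omega>"
proof (induction n)
  case 0
  then show ?case by simp
next
  case (Suc n)
  show ?case
  proof (cases "\<exists>m. 1 \<le> m \<and> m \<le> n \<and> u - (\<Sum>j<m. Y (Suc j) \<omega> - X (Suc j) \<omega>) < 0")
    case True
    then show ?thesis by (meson le_Suc_eq)
  next
    case False
    with Suc.IH have s: "u - (\<Sum>j<n. Y (Suc j) \<omega> - X (Suc j) \<omega>) \<le> surplus u X Y I n \<omega>" by blast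
    show ?thesis
    proof (cases "u - (\<Sum>j<n. Y (Suc j) \<omega> - X (Suc j) \<omega>) < 0")
      case True
      have "n \<noteq> 0"
      proof
        assume "n = 0" with True u show False by simp
      qed
      then show ?thesis using True by (intro disjI1 exI[of _ n]) auto
    next
      case False
      then have s0: "0 \<le> surplus u X Y I n \<omega>" using s by linarith
      have "surplus u X Y I n \<omega> \<le> surplus u X Y I n \<omega> * (1 + I (Suc n) \<omega>)"
        using s0 I by (simp add: algebra_simps)
      then show ?thesis using s by (intro disjI2) simp
    qed
  qed
qed

theorem mainTheorem7:
  fixes M :: "'a measure" and X Y I :: "nat \<Rightarrow> 'a \<Rightarrow> real" and R u :: real
  assumes "prob_space M"
    and rvX: "\<And>n. n \<ge> 1 \<Longrightarrow> X n \<in> borel_measurable M"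
    and rvY: "\<And>n. n \<ge> 1 \<Longrightarrow> Y n \<in> borel_measurable M"
    and rvI: "\<And>n. n \<ge> 1 \<Longrightarrow> I n \<in> borel_measurable M"
    and nonnegX: "\<And>n. n \<ge> 1 \<Longrightarrow> AE \<omega> in M. X n \<omega> \<ge> 0"
    and nonnegY: "\<And>n. n \<ge> 1 \<Longrightarrow> AE \<omega> in M. Y n \<omega> \<ge> 0"
    and nonnegI: "\<And>n. n \<ge> 1 \<Longrightarrow> AE \<omega> in M. I n \<omega> \<ge> 0"
    and intX: "\<And>n. n \<ge> 1 \<Longrightarrow> integrable M (X n)"
    and intY: "\<And>n. n \<ge> 1 \<Longrightarrow> integrable M (Y n)"
    and intI: "\<And>n. n \<ge> 1 \<Longrightarrow> integrable M (I n)"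
    and idX: "\<And>n. n \<ge> 1 \<Longrightarrow> distr M borel (X n) = distr M borel (X 1)"
    and idY: "\<And>n. n \<ge> 1 \<Longrightarrow> distr M borel (Y n) = distr M borel (Y 1)"
    and idI: "\<And>n. n \<ge> 1 \<Longrightarrow> distr M borel (I n) = distr M borel (I 1)"
    and indX: "prob_space.indep_vars M (\<lambda>_. borel) X {1..}"
    and indY: "prob_space.indep_vars M (\<lambda>_. borel) Y {1..}"
    and indI: "prob_space.indep_vars M (\<lambda>_. borel) I {1..}"
    and mutual: "prob_space.indep_vars M (\<lambda>_. PiM {1..} (\<lambda>_. borel))
        (\<lambda>k \<omega>. case k of 0 \<Rightarrow> (\<lambda>n\<in>{1..}. X n \<omega>)
                       | Suc 0 \<Rightarrow> (\<lambda>n\<in>{1..}. Y n \<omega>)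
                       | Suc (Suc _) \<Rightarrow> (\<lambda>n\<in>{1..}. I n \<omega>))
        {0, 1, 2::nat}"
    and R_pos: "R > 0"
    and lundberg: "(\<integral>\<^sup>+ \<omega>. ennreal (exp (R * (Y 1 \<omega> - X 1 \<omega>))) \<partial>M) \<le> 1"
    and u_pos: "u > 0"
  shows "ruin_prob M u X Y I \<le> exp (- R * u)"
proof -
  interpret P: prob_space M by fact
  define Xs where "Xs = (\<lambda>\<omega>. \<lambda>n\<in>{1::nat..}. X n \<omega>)"
  define Ys where "Ys = (\<lambda>\<omega>. \<lambda>n\<in>{1::nat..}. Y n \<omega>)"
  have mut: "P.prob (Xs -` A \<inter> space M \<inter> (Ys -` B \<inter> space M))
     = P.prob (Xs -` A \<inter> space M) * P.prob (Ys -` B \<inter> space M)"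
    if A: "A \<in> sets (PiM {1..} (\<lambda>_. borel))" and B: "B \<in> sets (PiM {1..} (\<lambda>_. borel))" for A B
  proof -
    have "P.prob (\<Inter>j\<in>{0,1::nat}. (if j = 0 then Xs -` A \<inter> space M else Ys -` B \<inter> space M))
      = (\<Prod>j\<in>{0,1::nat}. P.prob (if j = 0 then Xs -` A \<inter> space M else Ys -` B \<inter> space M))"
      apply (rule P.indep_setsD[OF mutual[unfolded P.indep_vars_def2, THEN conjunct2]])
      using A B by (auto simp: Xs_def Ys_def)
    then have "P.prob (Ys -` B \<inter> space M \<inter> (Xs -` A \<inter> space M)) = P.prob (Xs -` A \<inter> space M) * P.prob (Ys -` B \<inter> space M)" by simp
    then show ?thesis by (simp only: Int_commute)
  qed
  define V where "V = (\<lambda>i \<omega>. if fst i then Y (snd i) \<omega> else X (snd i) \<omega>)"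
  have indV: "P.indep_vars (\<lambda>_. borel) V (UNIV \<times> {1..})"
    unfolding V_def by (rule P.combine_indep[OF indX indY mut[unfolded Xs_def Ys_def]])
  have mXs[measurable]: "X (Suc k) \<in> borel_measurable M" for k using rvX by simp
  have mYs[measurable]: "Y (Suc k) \<in> borel_measurable M" for k using rvY by simp
  define W where "W = (\<lambda>m \<omega>. \<Sum>j<m. Y (Suc j) \<omega> - X (Suc j) \<omega>)"
  have mW[measurable]: "W m \<in> borel_measurable M" for m unfolding W_def by measurable
  define Hw where "Hw = (\<lambda>n \<omega>. \<exists>m. 1 \<le> m \<and> m \<le> n \<and> u < W m \<omega>)"
  have mH[measurable]: "Measurable.pred M (Hw n)" for n unfolding Hw_def by measurable
  define Fw where "Fw = (\<lambda>n \<omega>. if Hw n \<omega> then ennreal (exp (R * u)) else 0)"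
  define Gw where "Gw = (\<lambda>n \<omega>. if Hw n \<omega> then 0 else ennreal (exp (R * W n \<omega>)))"
  define Cw where "Cw = (\<lambda>n \<omega>. ennreal (exp (R * (Y (Suc n) \<omega> - X (Suc n) \<omega>))))"
  have mF[measurable]: "Fw n \<in> borel_measurable M" for n unfolding Fw_def by measurable
  have mG[measurable]: "Gw n \<in> borel_measurable M" for n unfolding Gw_def by measurable
  have mC[measurable]: "Cw n \<in> borel_measurable M" for n unfolding Cw_def by measurable
  have splitE: "(\<integral>\<^sup>+\<omega>. ennreal (exp (R * (Y k \<omega> - X k \<omega>))) \<partial>M)
      = (\<integral>\<^sup>+\<omega>. ennreal (exp (R * Y k \<omega>)) \<partial>M) * (\<integral>\<^sup>+\<omega>. ennreal (exp (- R * X k \<omega>)) \<partial>M)"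
    if k: "k \<ge> 1" for k
  proof -
    have "(\<integral>\<^sup>+\<omega>. ennreal (exp (R * (Y k \<omega> - X k \<omega>))) \<partial>M)
      = (\<integral>\<^sup>+\<omega>. (\<lambda>r. ennreal (exp (R * r (True, k)))) (restrict (\<lambda>i. V i \<omega>) {(True,k)})
           * (\<lambda>r. ennreal (exp (- R * r (False, k)))) (restrict (\<lambda>i. V i \<omega>) {(False,k)}) \<partial>M)"
      by (intro nn_integral_cong) (simp add: V_def ennreal_mult[symmetric] exp_add[symmetric] algebra_simps)
    also have "\<dots> = (\<integral>\<^sup>+\<omega>. (\<lambda>r. ennreal (exp (R * r (True, k)))) (restrict (\<lambda>i. V i \<omega>) {(True,k)}) \<partial>M)
       * (\<integral>\<^sup>+\<omega>. (\<lambda>r. ennreal (exp (- R * r (False, k)))) (restrict (\<lambda>i. V i \<omega>) {(False,k)}) \<partial>M)"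
      by (rule P.indep_prod_nn[OF indV]) (use k in auto)
    also have "\<dots> = (\<integral>\<^sup>+\<omega>. ennreal (exp (R * Y k \<omega>)) \<partial>M) * (\<integral>\<^sup>+\<omega>. ennreal (exp (- R * X k \<omega>)) \<partial>M)"
      by (simp add: V_def)
    finally show ?thesis .
  qed
  have eqY: "(\<integral>\<^sup>+\<omega>. ennreal (exp (R * Y k \<omega>)) \<partial>M) = (\<integral>\<^sup>+\<omega>. ennreal (exp (R * Y 1 \<omega>)) \<partial>M)"
    if k: "k \<ge> 1" for k
  proof -
    have "(\<integral>\<^sup>+\<omega>. ennreal (exp (R * Y k \<omega>)) \<partial>M) = (\<integral>\<^sup>+x. ennreal (exp (R * x)) \<partial>distr M borel (Y k))"
      by (rule nn_integral_distr[symmetric]) (use rvY k in auto)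
    also have "\<dots> = (\<integral>\<^sup>+x. ennreal (exp (R * x)) \<partial>distr M borel (Y 1))" using idY[OF k] by simp
    also have "\<dots> = (\<integral>\<^sup>+\<omega>. ennreal (exp (R * Y 1 \<omega>)) \<partial>M)"
      by (rule nn_integral_distr) (use rvY in auto)
    finally show ?thesis .
  qed
  have eqX: "(\<integral>\<^sup>+\<omega>. ennreal (exp (- R * X k \<omega>)) \<partial>M) = (\<integral>\<^sup>+\<omega>. ennreal (exp (- R * X 1 \<omega>)) \<partial>M)"
    if k: "k \<ge> 1" for k
  proof -
    have "(\<integral>\<^sup>+\<omega>. ennreal (exp (- R * X k \<omega>)) \<partial>M) = (\<integral>\<^sup>+x. ennreal (exp (- R * x)) \<partial>distr M borel (X k))"
      by (rule nn_integral_distr[symmetric]) (use rvX k in auto)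
    also have "\<dots> = (\<integral>\<^sup>+x. ennreal (exp (- R * x)) \<partial>distr M borel (X 1))" using idX[OF k] by simp
    also have "\<dots> = (\<integral>\<^sup>+\<omega>. ennreal (exp (- R * X 1 \<omega>)) \<partial>M)"
      by (rule nn_integral_distr) (use rvX in auto)
    finally show ?thesis .
  qed
  have intC: "(\<integral>\<^sup>+\<omega>. Cw n \<omega> \<partial>M) \<le> 1" for n
  proof -
    have "(\<integral>\<^sup>+\<omega>. Cw n \<omega> \<partial>M) = (\<integral>\<^sup>+\<omega>. ennreal (exp (R * (Y (Suc n) \<omega> - X (Suc n) \<omega>))) \<partial>M)"
      unfolding Cw_def ..
    also have "\<dots> = (\<integral>\<^sup>+\<omega>. ennreal (exp (R * Y (Suc n) \<omega>)) \<partial>M) * (\<integral>\<^sup>+\<omega>. ennreal (exp (- R * X (Suc n) \<omega>)) \<partial>M)"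
      by (rule splitE) simp
    also have "\<dots> = (\<integral>\<^sup>+\<omega>. ennreal (exp (R * Y 1 \<omega>)) \<partial>M) * (\<integral>\<^sup>+\<omega>. ennreal (exp (- R * X 1 \<omega>)) \<partial>M)"
      using eqX[of "Suc n"] eqY[of "Suc n"] by simp
    also have "\<dots> = (\<integral>\<^sup>+\<omega>. ennreal (exp (R * (Y 1 \<omega> - X 1 \<omega>))) \<partial>M)"
      by (rule splitE[symmetric]) simp
    finally have "(\<integral>\<^sup>+\<omega>. Cw n \<omega> \<partial>M) = (\<integral>\<^sup>+\<omega>. ennreal (exp (R * (Y 1 \<omega> - X 1 \<omega>))) \<partial>M)" .
    then show ?thesis using lundberg by simp
  qed
  have pw: "Fw (Suc n) \<omega> + Gw (Suc n) \<omega> \<le> Fw n \<omega> + Gw n \<omega> * Cw n \<omega>" for n \<omega>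
  proof -
    have WS: "W (Suc n) \<omega> = W n \<omega> + (Y (Suc n) \<omega> - X (Suc n) \<omega>)" by (simp add: W_def)
    have HS: "Hw (Suc n) \<omega> \<longleftrightarrow> Hw n \<omega> \<or> u < W (Suc n) \<omega>" unfolding Hw_def by (auto simp: le_Suc_eq)
    have e: "ennreal (exp (R * W n \<omega>)) * Cw n \<omega> = ennreal (exp (R * W (Suc n) \<omega>))"
      unfolding Cw_def WS by (simp add: ennreal_mult[symmetric] exp_add[symmetric] algebra_simps)
    show ?thesis
    proof (cases "Hw n \<omega>")
      case True then show ?thesis by (simp add: Fw_def Gw_def HS)
    next
      case False
      show ?thesis
      proof (cases "u < W (Suc n) \<omega>")
        case True
        have "exp (R * u) \<le> exp (R * W (Suc n) \<omega>)" using True R_pos by (auto intro!: mult_left_mono)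
        then show ?thesis using False True e by (simp add: Fw_def Gw_def HS ennreal_leI)
      next
        case F2: False
        then show ?thesis using False e by (simp add: Fw_def Gw_def HS)
      qed
    qed
  qed
  have indstep: "(\<integral>\<^sup>+\<omega>. Gw n \<omega> * Cw n \<omega> \<partial>M) = (\<integral>\<^sup>+\<omega>. Gw n \<omega> \<partial>M) * (\<integral>\<^sup>+\<omega>. Cw n \<omega> \<partial>M)" for n
  proof -
    define K where "K = (UNIV :: bool set) \<times> {1..n}"
    define K' where "K' = (UNIV :: bool set) \<times> {Suc n}"
    define Wr where "Wr = (\<lambda>m (r :: bool \<times> nat \<Rightarrow> real). \<Sum>j<m. r (True, Suc j) - r (False, Suc j))"
    define g where "g = (\<lambda>r. if (\<exists>m. 1 \<le> m \<and> m \<le> n \<and> u < Wr m r) then 0 else ennreal (exp (R * Wr n r)))"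
    define c where "c = (\<lambda>r :: bool \<times> nat \<Rightarrow> real. ennreal (exp (R * (r (True, Suc n) - r (False, Suc n)))))"
    have WR: "W m \<omega> = Wr m (restrict (\<lambda>i. V i \<omega>) K)" if "m \<le> n" for m \<omega>
      unfolding W_def Wr_def K_def using that by (intro sum.cong) (auto simp: V_def)
    have HR: "Hw n \<omega> \<longleftrightarrow> (\<exists>m. 1 \<le> m \<and> m \<le> n \<and> u < Wr m (restrict (\<lambda>i. V i \<omega>) K))" for \<omega>
      unfolding Hw_def by (auto simp: WR)
    have GR: "Gw n \<omega> = g (restrict (\<lambda>i. V i \<omega>) K)" for \<omega>
      unfolding Gw_def g_def HR using WR[of n] by auto
    have CR: "Cw n \<omega> = c (restrict (\<lambda>i. V i \<omega>) K')" for \<omega>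
      unfolding Cw_def c_def K'_def by (simp add: V_def)
    have mg: "g \<in> borel_measurable (PiM K (\<lambda>_. borel))" unfolding g_def Wr_def by measurable
    have mc: "c \<in> borel_measurable (PiM K' (\<lambda>_. borel))" unfolding c_def by measurable
    have "(\<integral>\<^sup>+\<omega>. Gw n \<omega> * Cw n \<omega> \<partial>M) = (\<integral>\<^sup>+\<omega>. g (restrict (\<lambda>i. V i \<omega>) K) * c (restrict (\<lambda>i. V i \<omega>) K') \<partial>M)"
      by (simp add: GR CR)
    also have "\<dots> = (\<integral>\<^sup>+\<omega>. g (restrict (\<lambda>i. V i \<omega>) K) \<partial>M) * (\<integral>\<^sup>+\<omega>. c (restrict (\<lambda>i. V i \<omega>) K') \<partial>M)"
      by (rule P.indep_prod_nn[OF indV _ _ _ mg mc]) (auto simp: K_def K'_def)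
    also have "\<dots> = (\<integral>\<^sup>+\<omega>. Gw n \<omega> \<partial>M) * (\<integral>\<^sup>+\<omega>. Cw n \<omega> \<partial>M)"
      by (simp add: GR CR)
    finally show ?thesis .
  qed
  have induct: "(\<integral>\<^sup>+\<omega>. Fw n \<omega> + Gw n \<omega> \<partial>M) \<le> 1" for n
  proof (induction n)
    case 0
    have "Fw 0 \<omega> + Gw 0 \<omega> = 1" for \<omega> by (simp add: Fw_def Gw_def Hw_def W_def)
    then show ?case by (simp add: P.emeasure_space_1)
  next
    case (Suc n)
    have "(\<integral>\<^sup>+\<omega>. Fw (Suc n) \<omega> + Gw (Suc n) \<omega> \<partial>M) \<le> (\<integral>\<^sup>+\<omega>. Fw n \<omega> + Gw n \<omega> * Cw n \<omega> \<partial>M)"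
      by (rule nn_integral_mono) (rule pw)
    also have "\<dots> = (\<integral>\<^sup>+\<omega>. Fw n \<omega> \<partial>M) + (\<integral>\<^sup>+\<omega>. Gw n \<omega> * Cw n \<omega> \<partial>M)"
      by (rule nn_integral_add) measurable
    also have "\<dots> = (\<integral>\<^sup>+\<omega>. Fw n \<omega> \<partial>M) + (\<integral>\<^sup>+\<omega>. Gw n \<omega> \<partial>M) * (\<integral>\<^sup>+\<omega>. Cw n \<omega> \<partial>M)"
      by (simp add: indstep)
    also have "\<dots> \<le> (\<integral>\<^sup>+\<omega>. Fw n \<omega> \<partial>M) + (\<integral>\<^sup>+\<omega>. Gw n \<omega> \<partial>M) * 1"
      by (intro add_left_mono mult_left_mono intC) auto
    also have "\<dots> = (\<integral>\<^sup>+\<omega>. Fw n \<omega> + Gw n \<omega> \<partial>M)"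
      by (simp add: nn_integral_add)
    finally show ?case using Suc.IH by (rule order_trans)
  qed
  have bound_n: "P.prob {\<omega>\<in>space M. Hw n \<omega>} \<le> exp (- R * u)" for n
  proof -
    have "(\<integral>\<^sup>+\<omega>. Fw n \<omega> \<partial>M) = (\<integral>\<^sup>+\<omega>. ennreal (exp (R*u)) * indicator {\<omega>\<in>space M. Hw n \<omega>} \<omega> \<partial>M)"
      by (intro nn_integral_cong) (simp add: Fw_def indicator_def)
    also have "\<dots> = ennreal (exp (R*u)) * emeasure M {\<omega>\<in>space M. Hw n \<omega>}"
      by (rule nn_integral_cmult_indicator) measurable
    finally have eq: "(\<integral>\<^sup>+\<omega>. Fw n \<omega> \<partial>M) = ennreal (exp (R*u)) * ennreal (P.prob {\<omega>\<in>space M. Hw n \<omega>})"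
      by (simp add: P.emeasure_eq_measure)
    have "(\<integral>\<^sup>+\<omega>. Fw n \<omega> \<partial>M) \<le> (\<integral>\<^sup>+\<omega>. Fw n \<omega> + Gw n \<omega> \<partial>M)" by (intro nn_integral_mono) simp
    with induct[of n] eq have "ennreal (exp (R*u)) * ennreal (P.prob {\<omega>\<in>space M. Hw n \<omega>}) \<le> 1" by simp
    then have "ennreal (exp (R*u) * P.prob {\<omega>\<in>space M. Hw n \<omega>}) \<le> ennreal 1" by (subst ennreal_mult) auto
    then have le1: "exp (R*u) * P.prob {\<omega>\<in>space M. Hw n \<omega>} \<le> 1" by (subst (asm) ennreal_le_iff) auto
    have "exp (- R * u) = 1 / exp (R * u)" by (simp add: exp_minus inverse_eq_divide)
    with le1 show ?thesis by (simp add: pos_le_divide_eq mult.commute)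
  qed
  define H where "H = {\<omega>\<in>space M. \<exists>m\<ge>1. u < W m \<omega>}"
  have Hn: "H = (\<Union>n. {\<omega>\<in>space M. Hw n \<omega>})" unfolding H_def Hw_def by auto
  have setsH: "{\<omega>\<in>space M. Hw n \<omega>} \<in> sets M" for n by measurable
  have lim: "(\<lambda>n. P.prob {\<omega>\<in>space M. Hw n \<omega>}) \<longlonglongrightarrow> P.prob (\<Union>n. {\<omega>\<in>space M. Hw n \<omega>})"
  proof (rule P.finite_Lim_measure_incseq)
    show "range (\<lambda>n. {\<omega>\<in>space M. Hw n \<omega>}) \<subseteq> sets M" using setsH by auto
    show "incseq (\<lambda>n. {\<omega>\<in>space M. Hw n \<omega>})" unfolding incseq_def Hw_def by auto
  qed
  have probH: "P.prob H \<le> exp (- R * u)"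
    unfolding Hn by (rule LIMSEQ_le_const2[OF lim]) (use bound_n in auto)
  have AEI: "AE \<omega> in M. \<forall>k. 0 \<le> I (Suc k) \<omega>"
    using nonnegI by (subst AE_all_countable) auto
  have "ruin_prob M u X Y I \<le> P.prob H"
    unfolding ruin_prob_def
  proof (rule P.finite_measure_mono_AE)
    show "H \<in> sets M" unfolding H_def by measurable
    show "AE x in M. x \<in> (\<Union>n\<in>{1..}. {\<omega> \<in> space M. surplus u X Y I n \<omega> < 0}) \<longrightarrow> x \<in> H"
      using AEI
    proof eventually_elim
      case (elim \<omega>)
      show ?case
      proof
        assume "\<omega> \<in> (\<Union>n\<in>{1..}. {\<omega> \<in> space M. surplus u X Y I n \<omega> < 0})"
        then obtain n where n: "n \<ge> 1" "\<omega> \<in> space M" "surplus u X Y I n \<omega> < 0" by auto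
        from surplus_bound[where u=u and I=I and \<omega>=\<omega> and n=n and X=X and Y=Y, OF u_pos elim]
        show "\<omega> \<in> H"
        proof
          assume "\<exists>m. 1 \<le> m \<and> m \<le> n \<and> u - (\<Sum>j<m. Y (Suc j) \<omega> - X (Suc j) \<omega>) < 0"
          then show ?thesis unfolding H_def W_def using n by auto
        next
          assume "u - (\<Sum>j<n. Y (Suc j) \<omega> - X (Suc j) \<omega>) \<le> surplus u X Y I n \<omega>"
          then show ?thesis unfolding H_def W_def using n by (intro CollectI conjI exI[of _ n]) auto
        qed
      qed
    qed
  qed
  with probH show ?thesis by linarith
qed

end
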